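(* Let $n\ge2$ and let $Q_0\subset\mathbb{R}^n$ be a cube. For $N$ sufficiently large, $$s_N(R_{p,2}\log^\alpha)\lesssim\begin{cases}2^{-Nn(\frac{n+2}{2n}-\frac1p)}N^{-\alpha},& p>\frac{2n}{n+2},\ \alpha\in\mathbb{R},\\ N^{\frac12-\alpha},& p=\frac{2n}{n+2},\ \alpha>\frac12,\end{cases}$$ with implicit constants independent of $N$.
   Context: Cubes have sides parallel to axes; $\mathcal{D}(Q_0)$ is the family of dyadic subcubes of $Q_0$. A countable $\mathcal{Q}=(Q_i)\subset\mathcal{D}(Q_0)$ is sparse if there exist pairwise disjoint measurable $E_{Q_i}\subseteq Q_i$ with $|E_{Q_i}|\ge\frac12|Q_i|$; $S(Q_0)$ is the set of sparse families. For $f\in L^1(Q_0)$, $s_N(f)=\sup_{\mathcal{Q}\in S(Q_0)}\big[\sum_{Q\in\mathcal{Q},\,\ell(Q)\le2^{-(N-1)}\ell(Q_0)}\big(|Q|^{\frac1n-\frac12}\int_Q|f|\big)^2\big]^{1/2}$. The Riesz–Morrey–Tadmor space $R_{p,2}\log^\alpha(Q_0)$ is normed by $\|f\|=\sup\big\{\sum_i\big[(1-(\log|Q_i|)_-)^\alpha|Q_i|^{-1/p'}\int_{Q_i}|f|\big]^2\big\}^{1/2}$, the supremum over all families $(Q_i)$ of pairwise disjoint cubes in $\mathcal{D}(Q_0)$, where $(a)_-=\min\{a,0\}$ and $p'$ is the dual exponent; $s_N(R_{p,2}\log^\alpha)=\sup\{s_N(f):\|f\|_{R_{p,2}\log^\alpha(Q_0)}\le1\}$.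 *)

theory Defs
  imports "HOL-Analysis.Analysis"
begin

definition hcube :: "real^'n \<Rightarrow> real \<Rightarrow> (real^'n) set" where
  "hcube a l = {x. \<forall>i. a$i \<le> x$i \<and> x$i < a$i + l}"

text \<open>Dyadic subcubes of the cube Q0 = hcube a0 l0.\<close>
definition dyadic_cubes :: "real^'n \<Rightarrow> real \<Rightarrow> (real^'n) set set" where
  "dyadic_cubes a0 l0 =
     {hcube (a0 + (l0 / 2^k) *\<^sub>R (\<chi> i. real (j i))) (l0 / 2^k) | k j.
        \<forall>i. j i < (2::nat)^k}"

definition side_len :: "(real^'n) set \<Rightarrow> real" where
  "side_len Q = measure lebesgue Q powr (1 / real CARD('n))"

definition sparse_families :: "real^'n \<Rightarrow> real \<Rightarrow> (real^'n) set set set" where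
  "sparse_families a0 l0 =
     {S. countable S \<and> S \<subseteq> dyadic_cubes a0 l0 \<and>
        (\<exists>E. disjoint_family_on E S \<and>
             (\<forall>Q\<in>S. E Q \<in> sets lebesgue \<and> E Q \<subseteq> Q \<and>
                     measure lebesgue (E Q) \<ge> measure lebesgue Q / 2))}"

definition ennsqrt :: "ennreal \<Rightarrow> ennreal" where
  "ennsqrt x = (if x = top then top else ennreal (sqrt (enn2real x)))"

definition s_N :: "real^'n \<Rightarrow> real \<Rightarrow> nat \<Rightarrow> (real^'n \<Rightarrow> real) \<Rightarrow> ennreal" where
  "s_N a0 l0 N f =
     (SUP S \<in> sparse_families a0 l0.
        ennsqrt (\<Sum>\<^sub>\<infinity> Q \<in> {Q \<in> S. side_len Q \<le> 2 powr (- (real N - 1)) * l0}.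
           ennreal ((measure lebesgue Q powr (1 / real CARD('n) - 1/2)
                     * (LINT x:Q|lebesgue. \<bar>f x\<bar>))\<^sup>2)))"

text \<open>Norm of the Riesz--Morrey--Tadmor space; 1/p' is written as 1 - 1/p;
  (a)_- = min a 0, log is the natural logarithm.\<close>
definition rmt_norm :: "real^'n \<Rightarrow> real \<Rightarrow> real \<Rightarrow> real \<Rightarrow> (real^'n \<Rightarrow> real) \<Rightarrow> ennreal" where
  "rmt_norm a0 l0 p \<alpha> f =
     (SUP F \<in> {F. F \<subseteq> dyadic_cubes a0 l0 \<and> disjoint F}.
        ennsqrt (\<Sum>\<^sub>\<infinity> Q \<in> F.
           ennreal (((1 - min (ln (measure lebesgue Q)) 0) powr \<alpha>
                     * measure lebesgue Q powr (- (1 - 1 / p))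
                     * (LINT x:Q|lebesgue. \<bar>f x\<bar>))\<^sup>2)))"

definition s_N_RMT :: "real^'n \<Rightarrow> real \<Rightarrow> real \<Rightarrow> real \<Rightarrow> nat \<Rightarrow> ennreal" where
  "s_N_RMT a0 l0 p \<alpha> N =
     (SUP f \<in> {f. set_integrable lebesgue (hcube a0 l0) f \<and> rmt_norm a0 l0 p \<alpha> f \<le> 1}.
        s_N a0 l0 N f)"

end

theory Submission
  imports Defs "HOL-Real_Asymp.Real_Asymp"
begin
lemma hcube_borel: "hcube (a::real^'n) l \<in> sets borel"
proof -
  have "hcube a l = (\<Inter>i. {x. a$i \<le> x$i} \<inter> {x. x$i < a$i + l})"
    unfolding hcube_def by auto
  also have "\<dots> \<in> sets borel"
    by (intro sets.countable_INT' sets.Int borel_closed borel_open closed_Collect_le open_Collect_less continuous_intros) auto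
  finally show ?thesis .
qed
lemma prodl: "(\<Prod>b\<in>(Basis::(real^'n) set). (\<chi> i. l) \<bullet> b) = l ^ CARD('n)"
proof -
  have "(\<Prod>b\<in>(Basis::(real^'n) set). (\<chi> i. l) \<bullet> b) = (\<Prod>b\<in>(Basis::(real^'n) set). l)"
    by (rule prod.cong) (auto dest!: axis_inverse simp: inner_axis)
  then show ?thesis by simp
qed
lemma inner_chi_const: "(b::real^'n) \<in> Basis \<Longrightarrow> (\<chi> i. l) \<bullet> b = l"
  by (auto dest!: axis_inverse simp: inner_axis)
lemma hcube_measure:
  fixes a :: "real^'n"
  assumes "l > 0"
  shows "hcube a l \<in> sets lebesgue" "measure lebesgue (hcube a l) = l ^ CARD('n)"
proof -
  have hb: "hcube a l \<in> sets lborel" using hcube_borel by simp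
  then show "hcube a l \<in> sets lebesgue" by (simp add: sets_completionI_sets)
  have s1: "box a (a + (\<chi> i. l)) \<subseteq> hcube a l" "hcube a l \<subseteq> cbox a (a + (\<chi> i. l))"
    unfolding hcube_def by (auto simp: mem_box_cart less_imp_le)
  have le: "\<forall>b\<in>Basis. a \<bullet> b \<le> (a + (\<chi> i. l)) \<bullet> b"
    using assms by (auto simp: inner_add_left inner_chi_const)
  have pr: "(\<Prod>b\<in>(Basis::(real^'n) set). (a + (\<chi> i. l) - a) \<bullet> b) = l ^ CARD('n)"
    using prodl by simp
  have e1: "emeasure lborel (box a (a + (\<chi> i. l))) = ennreal (l ^ CARD('n))"
    using le pr by (simp add: emeasure_lborel_box_eq)
  have e2: "emeasure lborel (cbox a (a + (\<chi> i. l))) = ennreal (l ^ CARD('n))"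
    using le pr by (simp add: emeasure_lborel_cbox_eq)
  have "emeasure lborel (hcube a l) = ennreal (l ^ CARD('n))"
    apply (rule antisym)
    using emeasure_mono[OF s1(2), of lborel] e2 apply simp
    using emeasure_mono[OF s1(1) hb] e1 by simp
  then have "measure lborel (hcube a l) = l ^ CARD('n)"
    using assms by (simp add: measure_def)
  then show "measure lebesgue (hcube a l) = l ^ CARD('n)"
    using hb by (simp add: measure_completion)
qed

lemma term_identity:
  fixes m w n p \<alpha> I :: real
  assumes "m > 0" "w > 0" "n > 0"
  shows "(m powr (1/n - 1/2) * I)\<^sup>2 =
    (m powr (2 * ((n + 2) / (2 * n) - 1 / p)) * w powr (-2*\<alpha>)) *
    (w powr \<alpha> * m powr (- (1 - 1 / p)) * I)\<^sup>2"
proof -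
  have e1: "(m powr (1/n - 1/2) * I)\<^sup>2 = m powr (2/n - 1) * I\<^sup>2"
    using assms by (simp add: power2_eq_square powr_add[symmetric] algebra_simps)
  have "(m powr (2 * ((n + 2) / (2 * n) - 1 / p)) * w powr (-2*\<alpha>)) *
    (w powr \<alpha> * m powr (- (1 - 1 / p)) * I)\<^sup>2 =
    (m powr (2 * ((n + 2) / (2 * n) - 1 / p)) * m powr (- (1 - 1 / p)) * m powr (- (1 - 1 / p)))
    * (w powr (-2*\<alpha>) * w powr \<alpha> * w powr \<alpha>) * I\<^sup>2"
    by (simp add: power2_eq_square algebra_simps)
  also have "w powr (-2*\<alpha>) * w powr \<alpha> * w powr \<alpha> = 1"
    using assms by (simp add: powr_add[symmetric])
  also have "m powr (2 * ((n + 2) / (2 * n) - 1 / p)) * m powr (- (1 - 1 / p)) * m powr (- (1 - 1 / p))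
     = m powr (2/n - 1)"
    using assms by (simp add: powr_add[symmetric] field_simps)
  finally show ?thesis using e1 by simp
qed

definition dgen :: "real^'n \<Rightarrow> real \<Rightarrow> (real^'n) set \<Rightarrow> nat" where
  "dgen a0 l0 Q = (SOME k. \<exists>j. (\<forall>i. j i < (2::nat)^k) \<and>
      Q = hcube (a0 + (l0 / 2^k) *\<^sub>R (\<chi> i. real (j i))) (l0 / 2^k))"

lemma dgen_ex:
  assumes "Q \<in> dyadic_cubes a0 l0"
  shows "\<exists>j. (\<forall>i. j i < (2::nat)^(dgen a0 l0 Q)) \<and>
      Q = hcube (a0 + (l0 / 2^(dgen a0 l0 Q)) *\<^sub>R (\<chi> i. real (j i))) (l0 / 2^(dgen a0 l0 Q))"
proof -
  have "\<exists>k j. (\<forall>i. j i < (2::nat)^k) \<and>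
      Q = hcube (a0 + (l0 / 2^k) *\<^sub>R (\<chi> i. real (j i))) (l0 / 2^k)"
    using assms unfolding dyadic_cubes_def by blast
  then show ?thesis unfolding dgen_def by (rule someI_ex)
qed

lemma dyadic_measure:
  fixes a0 :: "real^'n"
  assumes "Q \<in> dyadic_cubes a0 l0" "l0 > 0"
  shows "Q \<in> sets lebesgue" "measure lebesgue Q = (l0 / 2^(dgen a0 l0 Q)) ^ CARD('n)"
proof -
  define k where "k = dgen a0 l0 Q"
  obtain j where j: "Q = hcube (a0 + (l0 / 2^k) *\<^sub>R (\<chi> i. real (j i))) (l0 / 2^k)"
    using dgen_ex[OF assms(1)] unfolding k_def by blast
  have p: "l0 / 2^k > 0" using assms(2) by simp
  show "Q \<in> sets lebesgue" unfolding j by (rule hcube_measure(1)[OF p])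
  have "measure lebesgue Q = (l0 / 2^k) ^ CARD('n)" unfolding j
    by (rule hcube_measure(2)[OF p])
  then show "measure lebesgue Q = (l0 / 2^(dgen a0 l0 Q)) ^ CARD('n)" by (simp add: k_def)
qed

lemma dyadic_disjoint:
  assumes "Q1 \<in> dyadic_cubes a0 l0" "Q2 \<in> dyadic_cubes a0 l0" "l0 > 0"
    "dgen a0 l0 Q1 = dgen a0 l0 Q2" "Q1 \<noteq> Q2"
  shows "Q1 \<inter> Q2 = {}"
proof -
  define k where "k = dgen a0 l0 Q1"
  define s :: real where "s = l0 / 2^k"
  have s: "s > 0" using assms(3) by (simp add: s_def)
  obtain j1 where j1: "Q1 = hcube (a0 + s *\<^sub>R (\<chi> i. real (j1 i))) s"
    using dgen_ex[OF assms(1)] by (auto simp: k_def s_def)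
  obtain j2 where j2: "Q2 = hcube (a0 + s *\<^sub>R (\<chi> i. real (j2 i))) s"
    using dgen_ex[OF assms(2)] assms(4) by (auto simp: k_def s_def)
  have "j1 \<noteq> j2" using j1 j2 assms(5) by auto
  then obtain i where i: "j1 i \<noteq> j2 i" by auto
  show ?thesis
  proof (rule ccontr)
    assume "Q1 \<inter> Q2 \<noteq> {}"
    then obtain x where x: "x \<in> Q1" "x \<in> Q2" by auto
    have a: "a0$i + s * j1 i \<le> x$i" "x$i < a0$i + s * j1 i + s"
      using x(1) unfolding j1 hcube_def by auto
    have b: "a0$i + s * j2 i \<le> x$i" "x$i < a0$i + s * j2 i + s"
      using x(2) unfolding j2 hcube_def by auto
    have "s * j1 i < s * (j2 i + 1)" "s * j2 i < s * (j1 i + 1)" using a b by (auto simp: algebra_simps)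
    then have "real (j1 i) < j2 i + 1" "real (j2 i) < j1 i + 1" using s by (auto simp: mult_less_cancel_left_pos)
    then show False using i by linarith
  qed
qed

lemma ennsqrt_le1: "x \<ge> 0 \<Longrightarrow> ennsqrt (ennreal x) \<le> 1 \<Longrightarrow> x \<le> 1"
  by (simp add: ennsqrt_def)

lemma rmt_finite:
  fixes a0 :: "real^'n"
  assumes "rmt_norm a0 l0 p \<alpha> f \<le> 1" "finite F" "F \<subseteq> dyadic_cubes a0 l0" "disjoint F"
  shows "(\<Sum>Q\<in>F. ((1 - min (ln (measure lebesgue Q)) 0) powr \<alpha>
                     * measure lebesgue Q powr (- (1 - 1 / p))
                     * (LINT x:Q|lebesgue. \<bar>f x\<bar>))\<^sup>2) \<le> 1"
    (is "(\<Sum>Q\<in>F. ?g Q) \<le> 1")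
proof -
  have "ennsqrt (\<Sum>\<^sub>\<infinity> Q \<in> F. ennreal (?g Q)) \<le> rmt_norm a0 l0 p \<alpha> f"
    unfolding rmt_norm_def using assms(3,4) by (intro SUP_upper) auto
  also have "(\<Sum>\<^sub>\<infinity> Q \<in> F. ennreal (?g Q)) = ennreal (\<Sum>Q\<in>F. ?g Q)"
    using assms(2) by (simp add: sum_ennreal)
  finally show ?thesis using assms(1) by (intro ennsqrt_le1) (auto intro: sum_nonneg)
qed

definition coefm :: "real \<Rightarrow> real \<Rightarrow> real \<Rightarrow> real \<Rightarrow> real" where
  "coefm n p \<alpha> m = m powr (2 * ((n + 2) / (2 * n) - 1 / p)) * (1 - min (ln m) 0) powr (-2*\<alpha>)"

lemma coefm_nonneg: "coefm n p \<alpha> m \<ge> 0"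
  by (simp add: coefm_def)

lemma group_bound:
  fixes a0 :: "real^'n"
  assumes "rmt_norm a0 l0 p \<alpha> f \<le> 1" "l0 > 0" "finite T" "T \<subseteq> dyadic_cubes a0 l0"
  shows "(\<Sum>Q\<in>T. (measure lebesgue Q powr (1 / real CARD('n) - 1/2)
                     * (LINT x:Q|lebesgue. \<bar>f x\<bar>))\<^sup>2)
     \<le> (\<Sum>k\<in>dgen a0 l0 ` T. coefm (real CARD('n)) p \<alpha> ((l0 / 2^k) ^ CARD('n)))"
proof -
  let ?n = "real CARD('n)"
  let ?A = "\<lambda>Q. ((1 - min (ln (measure lebesgue Q)) 0) powr \<alpha>
                     * measure lebesgue Q powr (- (1 - 1 / p))
                     * (LINT x:Q|lebesgue. \<bar>f x\<bar>))\<^sup>2"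
  let ?t = "\<lambda>Q. (measure lebesgue Q powr (1 / ?n - 1/2) * (LINT x:Q|lebesgue. \<bar>f x\<bar>))\<^sup>2"
  let ?c = "\<lambda>k. coefm ?n p \<alpha> ((l0 / 2^k) ^ CARD('n))"
  have t: "?t Q = ?c (dgen a0 l0 Q) * ?A Q" if "Q \<in> T" for Q
  proof -
    have Qd: "Q \<in> dyadic_cubes a0 l0" using that assms(4) by auto
    have m: "measure lebesgue Q = (l0 / 2^(dgen a0 l0 Q)) ^ CARD('n)"
      using dyadic_measure(2)[OF Qd assms(2)] .
    have mp: "measure lebesgue Q > 0" unfolding m using assms(2) by simp
    have wp: "1 - min (ln (measure lebesgue Q)) 0 > 0" by simp
    show ?thesis
      using term_identity[where m="measure lebesgue Q" and w="1 - min (ln (measure lebesgue Q)) 0" and n= ?n and p=p and \<alpha>=\<alpha>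
          and I="LINT x:Q|lebesgue. \<bar>f x\<bar>"] mp wp unfolding coefm_def m[symmetric] by simp
  qed
  have "(\<Sum>Q\<in>T. ?t Q) = (\<Sum>Q\<in>T. ?c (dgen a0 l0 Q) * ?A Q)"
    using t by (rule sum.cong[OF refl])
  also have "\<dots> = (\<Sum>k\<in>dgen a0 l0 ` T. \<Sum>Q\<in>{Q\<in>T. dgen a0 l0 Q = k}. ?c (dgen a0 l0 Q) * ?A Q)"
    using assms(3) by (intro sum.group[symmetric]) auto
  also have "\<dots> \<le> (\<Sum>k\<in>dgen a0 l0 ` T. ?c k)"
  proof (rule sum_mono)
    fix k assume "k \<in> dgen a0 l0 ` T"
    let ?F = "{Q\<in>T. dgen a0 l0 Q = k}"
    have "(\<Sum>Q\<in>?F. ?c (dgen a0 l0 Q) * ?A Q) = ?c k * (\<Sum>Q\<in>?F. ?A Q)"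
      by (simp add: sum_distrib_left)
    also have "(\<Sum>Q\<in>?F. ?A Q) \<le> 1"
    proof (rule rmt_finite[OF assms(1)])
      show "finite ?F" using assms(3) by simp
      show "?F \<subseteq> dyadic_cubes a0 l0" using assms(4) by auto
      show "disjoint ?F"
        unfolding disjoint_def using dyadic_disjoint[OF _ _ assms(2)] assms(4) by blast
    qed
    then have "?c k * (\<Sum>Q\<in>?F. ?A Q) \<le> ?c k"
      using coefm_nonneg[of ?n p \<alpha>] by (simp add: mult_left_le)
    finally show "(\<Sum>Q\<in>?F. ?c (dgen a0 l0 Q) * ?A Q) \<le> ?c k" .
  qed
  finally show ?thesis .
qed

lemma powk: "(l0::real) > 0 \<Longrightarrow> ((l0 / 2^k) ^ n) powr b = l0 powr (real n*b) * (2 powr (- (real n*b)))^k"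
  for b :: real and n k :: nat
proof -
  assume l: "l0 > 0"
  have "((l0 / 2^k) ^ n) powr b = (l0 / 2^k) powr (n*b)"
    using l by (simp add: powr_realpow[symmetric] powr_powr)
  also have "\<dots> = l0 powr (n*b) / (2^k) powr (n*b)" using l by (simp add: powr_divide)
  also have "(2^k::real) powr (n*b) = (2 powr (n*b))^k"
    by (simp add: powr_realpow[symmetric] powr_powr powr_powr_swap mult.commute)
  finally show ?thesis by (simp add: powr_minus divide_inverse power_inverse)
qed
lemma bnd: "\<exists>B>0. \<forall>j::nat. (1 + real j) powr a * q^j \<le> B" if "0<q" "q<1" for a q :: real
proof -
  have "(\<lambda>j. (1 + real j) powr a * q^j) \<longlonglongrightarrow> 0"
    using that by real_asymp
  then have "Bseq (\<lambda>j. (1 + real j) powr a * q^j)" using convergent_imp_Bseq convergentI by blast 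
  then obtain B where "B>0" "\<And>j. norm ((1 + real j) powr a * q^j) \<le> B" unfolding Bseq_def by blast
  then show ?thesis by (intro exI[of _ B]) (auto simp: abs_le_iff)
qed
lemma powr_between: "0 < a \<Longrightarrow> a \<le> u \<Longrightarrow> u \<le> b \<Longrightarrow> u powr t \<le> max (b powr t) (a powr t)" for a b u t :: real
proof (cases "t \<ge> 0")
  case True
  assume "0 < a" "a \<le> u" "u \<le> b"
  then have "u powr t \<le> b powr t" using True by (intro powr_mono2) auto
  then show ?thesis by simp
next
  case False
  assume "0 < a" "a \<le> u" "u \<le> b"
  then have "u powr t \<le> a powr t" using False by (intro powr_mono2') auto
  then show ?thesis by simp
qed

lemma wbound:
  fixes n k :: nat and l0 t :: real
  assumes "n \<ge> 1" "l0 > 0" "k \<ge> 1" "real k * (n * ln 2) \<ge> 2 * \<bar>n * ln l0\<bar>"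
  shows "(1 - min (ln ((l0/2^k)^n)) 0) powr t \<le>
     max ((1 + n * ln 2 + \<bar>n * ln l0\<bar>) powr t) ((n * ln 2 / 2) powr t) * real k powr t"
proof -
  define L where "L = n * ln (2::real)"
  define d where "d = n * ln l0"
  have L: "L > 0" using assms(1) by (simp add: L_def)
  have lnm: "ln ((l0/2^k)^n) = d - k * L"
    using assms(2) by (simp add: ln_realpow ln_div L_def d_def algebra_simps)
  define w where "w = 1 - min (ln ((l0/2^k)^n)) 0"
  have w: "w = 1 + max (k*L - d) 0" unfolding w_def lnm by linarith
  have k: "real k \<ge> 1" using assms(3) by simp
  have kL: "real k * L \<ge> 2 * \<bar>d\<bar>" using assms(4) by (simp add: L_def d_def)
  have dd: "d \<le> \<bar>d\<bar>" by simp
  have w1: "w \<ge> k * L / 2" unfolding w using kL dd by linarith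
  have w2: "w \<le> k * (1 + L + \<bar>d\<bar>)"
  proof -
    have "w \<le> 1 + k*L + \<bar>d\<bar>" unfolding w using L by (auto simp: abs_le_iff)
    also have "\<dots> \<le> k * 1 + k * L + k * \<bar>d\<bar>" using k L
      by (intro add_mono) (auto intro: mult_right_mono[of 1 "real k" "\<bar>d\<bar>", simplified])
    finally show ?thesis by (simp add: algebra_simps)
  qed
  define u where "u = w / k"
  have kp: "real k > 0" using k by simp
  have wu: "w = k * u" unfolding u_def using kp by simp
  have u1: "L/2 \<le> u" unfolding u_def using w1 kp by (simp add: field_simps)
  have u2: "u \<le> 1 + L + \<bar>d\<bar>" unfolding u_def using w2 kp by (simp add: field_simps)
  have "w powr t = real k powr t * u powr t" unfolding wu
    using kp u1 L by (simp add: powr_mult)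
  also have "\<dots> \<le> real k powr t * max ((1 + L + \<bar>d\<bar>) powr t) ((L/2) powr t)"
    using L u1 u2 by (intro mult_left_mono powr_between) auto
  finally show ?thesis by (simp add: w_def L_def d_def mult.commute)
qed

lemma tele:
  fixes s x :: real
  assumes "s < 0" "x \<ge> 2"
  shows "x powr (s-1) \<le> ((x - 1) powr s - x powr s) / (-s)"
proof -
  have "\<forall>y. x - 1 \<le> y \<and> y \<le> x \<longrightarrow> ((\<lambda>z. z powr s) has_real_derivative s * y powr (s - 1)) (at y)"
    using assms by (auto intro!: derivative_eq_intros)
  then obtain z where z: "x - 1 < z" "z < x" "x powr s - (x - 1) powr s = (x - (x - 1)) * (s * z powr (s - 1))"
    using MVT2[of "x - 1" x "\<lambda>z. z powr s" "\<lambda>y. s * y powr (s - 1)"] by auto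
  have "x powr (s-1) \<le> z powr (s-1)"
    using z assms by (intro powr_mono2') auto
  also have "z powr (s-1) = ((x - 1) powr s - x powr s) / (-s)"
    using z(3) assms by (simp add: field_simps)
  finally show ?thesis .
qed

lemma finite_sub_ival: "finite (K::nat set) \<Longrightarrow> \<forall>k\<in>K. M \<le> k \<Longrightarrow> \<exists>j. K \<subseteq> {M..<M+j}"
proof -
  assume "finite K" "\<forall>k\<in>K. M \<le> k"
  then obtain j where "K \<subseteq> {..<j}" by (auto simp: finite_nat_set_iff_bounded)
  then have "K \<subseteq> {M..<M+j}" using \<open>\<forall>k\<in>K. M \<le> k\<close> by auto
  then show ?thesis by blast
qed

lemma tsum: "(\<Sum>k\<in>{M..<M+j}. g (real k - 1) - g (real k)) = g (real M - 1) - g (real (M+j) - 1)"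
  for g :: "real \<Rightarrow> real"
  by (induction j) (auto simp: algebra_simps)

lemma powr_tail_sum:
  fixes s :: real and M :: nat
  assumes "s < 0" "M \<ge> 2" "finite K" "\<forall>k\<in>K. M \<le> k"
  shows "(\<Sum>k\<in>K. real k powr (s-1)) \<le> (real M - 1) powr s / (-s)"
proof -
  obtain j where j: "K \<subseteq> {M..<M+j}" using finite_sub_ival[OF assms(3,4)] by blast
  have "(\<Sum>k\<in>K. real k powr (s-1)) \<le> (\<Sum>k\<in>{M..<M+j}. real k powr (s-1))"
    using j by (intro sum_mono2) auto
  also have "\<dots> \<le> (\<Sum>k\<in>{M..<M+j}. ((real k - 1) powr s - real k powr s) / (-s))"
    using assms by (intro sum_mono tele) auto
  also have "\<dots> = ((real M - 1) powr s - (real (M+j) - 1) powr s) / (-s)"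
    using tsum[of "\<lambda>x. x powr s" M j] sum_divide_distrib[where f="\<lambda>k. (real k - 1) powr s - real k powr s" and r="-s" and A="{M..<M+j}", symmetric]
    by simp
  also have "\<dots> \<le> (real M - 1) powr s / (-s)"
    using assms by (intro divide_right_mono) auto
  finally show ?thesis .
qed

lemma gsum: "(1 - q) * (\<Sum>k\<in>{M..<M+j}. q^k) = q^M - q^(M+j)" for q :: real
proof (induction j)
  case 0
  then show ?case by simp
next
  case (Suc j)
  have "(1 - q) * (\<Sum>k\<in>{M..<M+Suc j}. q^k) = (1 - q) * (\<Sum>k\<in>{M..<M+j}. q^k) + (1-q) * q^(M+j)"
    by (simp add: algebra_simps)
  also have "\<dots> = q^M - q^(M+Suc j)" using Suc by (simp add: algebra_simps)
  finally show ?case .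
qed

lemma geom_tail_sum:
  fixes q :: real and M :: nat
  assumes "0 \<le> q" "q < 1" "finite K" "\<forall>k\<in>K. M \<le> k"
  shows "(\<Sum>k\<in>K. q^k) \<le> q^M / (1 - q)"
proof -
  obtain j where j: "K \<subseteq> {M..<M+j}" using finite_sub_ival[OF assms(3,4)] by blast
  have "(\<Sum>k\<in>K. q^k) \<le> (\<Sum>k\<in>{M..<M+j}. q^k)"
    using j assms by (intro sum_mono2) auto
  also have "\<dots> = (q^M - q^(M+j)) / (1 - q)"
    using gsum[of q M j] assms by (simp add: field_simps)
  also have "\<dots> \<le> q^M / (1 - q)"
    using assms by (intro divide_right_mono) auto
  finally show ?thesis .
qed

lemma wbound_ex:
  fixes n :: nat and l0 t :: real
  assumes "n \<ge> 1" "l0 > 0"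
  shows "\<exists>D>0. \<exists>K1\<ge>1. \<forall>k\<ge>K1. (1 - min (ln ((l0/2^k)^n)) 0) powr t \<le> D * real k powr t"
proof -
  define D where "D = max ((1 + n * ln 2 + \<bar>n * ln l0\<bar>) powr t) ((n * ln 2 / 2) powr t)"
  have L: "n * ln (2::real) > 0" using assms by simp
  obtain K1 :: nat where K1: "real K1 \<ge> 2 * \<bar>n * ln l0\<bar> / (n * ln 2)" using real_arch_simple by blast
  have D: "D > 0" unfolding D_def using L assms(1) by (simp add: less_max_iff_disj)
  have "\<forall>k\<ge>max K1 1. (1 - min (ln ((l0/2^k)^n)) 0) powr t \<le> D * real k powr t"
  proof (intro allI impI)
    fix k :: nat assume k: "k \<ge> max K1 1"
    have "real k \<ge> 2 * \<bar>n * ln l0\<bar> / (n * ln 2)" using K1 k by linarith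
    then have "real k * (n * ln 2) \<ge> 2 * \<bar>n * ln l0\<bar>" using L by (simp add: field_simps)
    then show "(1 - min (ln ((l0/2^k)^n)) 0) powr t \<le> D * real k powr t"
      using wbound[OF assms, of k t] k unfolding D_def by auto
  qed
  then show ?thesis using D by (intro exI[of _ D] conjI exI[of _ "max K1 1"]) auto
qed

lemma kpow_bound:
  fixes t :: real and N k :: nat
  assumes "N \<ge> 2" "k \<ge> N - 1"
  shows "real k powr t \<le> 2 powr \<bar>t\<bar> * real N powr t * (1 + real (k - (N - 1))) powr \<bar>t\<bar>"
proof (cases "t \<ge> 0")
  case True
  define j where "j = real (k - (N - 1))"
  have j0: "j \<ge> 0" by (simp add: j_def)
  have k1: "real k \<ge> 1" using assms by simp
  have N1: "real N \<ge> 1" using assms by simp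
  have kj: "real k = real N - 1 + j" using assms unfolding j_def by linarith
  have h: "1 * j \<le> real N * j"
    using N1 j0 by (rule mult_right_mono)
  have "real k \<le> real N * (1 + j)" using kj h by (simp add: algebra_simps)
  then have "real k powr t \<le> (real N * (1 + j)) powr t"
    using True k1 by (intro powr_mono2) auto
  also have "\<dots> = real N powr t * (1 + j) powr t"
    using j0 N1 by (simp add: powr_mult)
  also have "\<dots> = 1 * (real N powr t * (1 + j) powr \<bar>t\<bar>)" using True by simp
  also have "\<dots> \<le> 2 powr \<bar>t\<bar> * (real N powr t * (1 + j) powr \<bar>t\<bar>)"
    by (rule mult_right_mono) (auto simp: ge_one_powr_ge_zero)
  finally show ?thesis by (simp add: mult.assoc j_def)
next
  case False
  have "real N / 2 \<le> real k" using assms by linarith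
  then have "real k powr t \<le> (real N / 2) powr t"
    using False assms by (intro powr_mono2') auto
  also have "\<dots> = 2 powr \<bar>t\<bar> * real N powr t"
  proof -
    have "(real N / 2) powr t = real N powr t / 2 powr t" by (rule powr_divide)
    also have "\<dots> = 2 powr (-t) * real N powr t" by (simp add: powr_minus field_simps)
    finally show ?thesis using False by simp
  qed
  also have "\<dots> = 2 powr \<bar>t\<bar> * real N powr t * 1" by simp
  also have "\<dots> \<le> 2 powr \<bar>t\<bar> * real N powr t * (1 + real (k - (N - 1))) powr \<bar>t\<bar>"
    by (rule mult_left_mono) (auto simp: ge_one_powr_ge_zero)
  finally show ?thesis .
qed

lemma case1:
  fixes n :: nat and l0 p \<alpha> :: real
  assumes n: "n \<ge> 1" and l0: "l0 > 0" and \<beta>: "(real n + 2) / (2 * real n) - 1 / p > 0"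
  shows "\<exists>C>0. \<exists>N0. \<forall>N\<ge>N0. \<forall>K. finite K \<and> (\<forall>k\<in>K. real N - 1 \<le> real k) \<longrightarrow>
     (\<Sum>k\<in>K. coefm (real n) p \<alpha> ((l0/2^k)^n))
       \<le> (C * 2 powr (- real N * real n * ((real n + 2) / (2 * real n) - 1 / p)) * real N powr (-\<alpha>))\<^sup>2"
proof -
  define \<beta> where "\<beta> = (real n + 2) / (2 * real n) - 1 / p"
  define x where "x = real n * (2 * \<beta>)"
  define t where "t = -2 * \<alpha>"
  define q :: real where "q = 2 powr (- x / 2)"
  have b0: "\<beta> > 0" using \<beta> by (simp add: \<beta>_def)
  have x: "x > 0" unfolding x_def using b0 n by simp
  have q1: "(2::real) powr (-(x/2)) < 2 powr 0" using x by (subst powr_less_cancel_iff) auto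
  have q0: "q > 0" "q < 1" using q1 by (auto simp: q_def)
  have q2: "q^2 = 2 powr (-x)" unfolding q_def by (simp add: powr_realpow[symmetric] powr_powr)
  obtain D K1 where D: "D > 0" "K1 \<ge> 1" and
    DK: "\<And>k. k \<ge> K1 \<Longrightarrow> (1 - min (ln ((l0/2^k)^n)) 0) powr t \<le> D * real k powr t"
    using wbound_ex[OF n l0, of t] by blast
  obtain B where B: "B > 0" "\<And>j::nat. (1 + real j) powr \<bar>t\<bar> * q^j \<le> B"
    using bnd[OF q0] by blast
  define P where "P = l0 powr x"
  have P: "P > 0" using l0 by (simp add: P_def)
  define C where "C = sqrt (P * D * 2 powr \<bar>t\<bar> * B / (q^2 * (1 - q)))"
  have C: "C > 0" unfolding C_def using P D B q0 by simp
  have C2: "C^2 = P * D * 2 powr \<bar>t\<bar> * B / (q^2 * (1 - q))"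
    unfolding C_def using P D B q0 by simp
  have main: "(\<Sum>k\<in>K. coefm (real n) p \<alpha> ((l0/2^k)^n))
       \<le> (C * 2 powr (- real N * real n * \<beta>) * real N powr (-\<alpha>))\<^sup>2"
    if N: "N \<ge> K1 + 2" and K: "finite K" "\<forall>k\<in>K. real N - 1 \<le> real k" for N K
  proof -
    have N2: "N \<ge> 2" using N by simp
    have Kk: "k \<ge> N - 1" if "k \<in> K" for k using K(2) that N2 by auto
    define E where "E = P * D * 2 powr \<bar>t\<bar> * real N powr t * B * q^(N-1)"
    have E: "E \<ge> 0" unfolding E_def using P D B q0 by simp
    have ck: "coefm (real n) p \<alpha> ((l0/2^k)^n) \<le> E * q^k" if k: "k \<in> K" for k
    proof -
      have kN: "k \<ge> N - 1" using Kk k .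
      define j where "j = k - (N - 1)"
      have kK1: "k \<ge> K1" using kN N by simp
      have e1: "((l0/2^k)^n) powr (2 * \<beta>) = P * (q^2)^k"
        unfolding P_def q2 x_def using powk[OF l0, where k=k and n=n and b="2*\<beta>"] by simp
      have "coefm (real n) p \<alpha> ((l0/2^k)^n) = P * (q^2)^k * (1 - min (ln ((l0/2^k)^n)) 0) powr t"
        unfolding coefm_def e1[unfolded \<beta>_def, symmetric] t_def \<beta>_def by simp
      also have "\<dots> \<le> P * (q^2)^k * (D * real k powr t)"
        using DK[OF kK1] P q0 by (intro mult_left_mono) auto
      also have "\<dots> \<le> P * (q^2)^k * (D * (2 powr \<bar>t\<bar> * real N powr t * (1 + real j) powr \<bar>t\<bar>))"
        using kpow_bound[OF N2 kN, of t] P q0 D unfolding j_def by (intro mult_left_mono) auto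
      also have "\<dots> = P * D * 2 powr \<bar>t\<bar> * real N powr t * q^(N-1) * q^k * ((1 + real j) powr \<bar>t\<bar> * q^j)"
      proof -
        have "(q^2)^k = q^(N-1) * q^k * q^j" unfolding j_def using kN
          by (simp add: power_mult[symmetric] power_add[symmetric] mult_2[where 'a=nat])
        then show ?thesis by (simp add: algebra_simps)
      qed
      also have "\<dots> \<le> P * D * 2 powr \<bar>t\<bar> * real N powr t * q^(N-1) * q^k * B"
        using B(2)[of j] P D q0 by (intro mult_left_mono) auto
      also have "\<dots> = E * q^k" unfolding E_def by (simp add: algebra_simps)
      finally show ?thesis .
    qed
    have "(\<Sum>k\<in>K. coefm (real n) p \<alpha> ((l0/2^k)^n)) \<le> (\<Sum>k\<in>K. E * q^k)"
      using ck by (rule sum_mono)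
    also have "\<dots> = E * (\<Sum>k\<in>K. q^k)" by (simp add: sum_distrib_left)
    also have "\<dots> \<le> E * (q^(N-1) / (1 - q))"
      using geom_tail_sum[of q K "N-1"] q0 K Kk E by (intro mult_left_mono) auto
    also have "\<dots> = C^2 * (q^2)^N * real N powr t"
    proof -
      have "q^(N-1) * q^(N-1) * q^2 = (q^2)^N"
      proof -
        have e: "N-1+(N-1)+2 = 2*N" using N2 by simp
        have "q^(N-1) * q^(N-1) * q^2 = q^(N-1+(N-1)+2)" by (simp add: power_add power2_eq_square)
        also have "\<dots> = (q^2)^N" unfolding e by (simp add: power_mult)
        finally show ?thesis .
      qed
      then have h: "(q^2)^N = q^(N-1) * q^(N-1) * q^2" by simp
      define X where "X = P * D * 2 powr \<bar>t\<bar> * B"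
      define R where "R = q^(N-1)"
      define Nt where "Nt = real N powr t"
      have q2p: "q^2 > 0" "1 - q > 0" using q0 by auto
      have "E * (q^(N-1) / (1 - q)) = X * Nt * R * R / (1 - q)"
        unfolding E_def X_def R_def Nt_def by (simp add: algebra_simps)
      also have "\<dots> = (X / (q^2 * (1 - q))) * (R * R * q^2) * Nt"
        using q2p by (simp add: field_simps)
      finally show ?thesis unfolding C2 h X_def R_def Nt_def .
    qed
    also have "\<dots> = (C * 2 powr (- real N * real n * \<beta>) * real N powr (-\<alpha>))\<^sup>2"
    proof -
      have "(q^2)^N = (2 powr (- real N * real n * \<beta>))^2"
        unfolding q2 x_def by (simp add: powr_realpow[symmetric] powr_powr algebra_simps)
      moreover have "real N powr t = (real N powr (-\<alpha>))^2"
        unfolding t_def by (simp add: powr_realpow[symmetric] powr_powr powr_add[symmetric] power2_eq_square)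
      ultimately show ?thesis by (simp add: power_mult_distrib)
    qed
    finally show ?thesis .
  qed
  show ?thesis
    using C main unfolding \<beta>_def by (intro exI[of _ C] conjI exI[of _ "K1 + 2"]) auto
qed

lemma case2:
  fixes n :: nat and l0 p \<alpha> :: real
  assumes n: "n \<ge> 1" and l0: "l0 > 0" and \<beta>: "(real n + 2) / (2 * real n) - 1 / p = 0"
    and \<alpha>: "\<alpha> > 1/2"
  shows "\<exists>C>0. \<exists>N0. \<forall>N\<ge>N0. \<forall>K. finite K \<and> (\<forall>k\<in>K. real N - 1 \<le> real k) \<longrightarrow>
     (\<Sum>k\<in>K. coefm (real n) p \<alpha> ((l0/2^k)^n)) \<le> (C * real N powr (1/2 - \<alpha>))\<^sup>2"
proof -
  define t where "t = -2 * \<alpha>"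
  define s where "s = 1 - 2 * \<alpha>"
  have s: "s < 0" using \<alpha> by (simp add: s_def)
  have ts: "t = s - 1" by (simp add: s_def t_def)
  obtain D K1 where D: "D > 0" "K1 \<ge> 1" and
    DK: "\<And>k. k \<ge> K1 \<Longrightarrow> (1 - min (ln ((l0/2^k)^n)) 0) powr t \<le> D * real k powr t"
    using wbound_ex[OF n l0, of t] by blast
  define C where "C = sqrt (D * 2 powr (-s) / (-s))"
  have Dp: "D * 2 powr (-s) / (-s) > 0"
    by (intro divide_pos_pos mult_pos_pos) (use D s in auto)
  have C: "C > 0" unfolding C_def using Dp by (simp only: real_sqrt_gt_zero)
  have C2: "C^2 = D * 2 powr (-s) / (-s)" unfolding C_def using Dp by (simp only: real_sqrt_pow2 less_imp_le)
  have main: "(\<Sum>k\<in>K. coefm (real n) p \<alpha> ((l0/2^k)^n)) \<le> (C * real N powr (1/2 - \<alpha>))\<^sup>2"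
    if N: "N \<ge> K1 + 4" and K: "finite K" "\<forall>k\<in>K. real N - 1 \<le> real k" for N K
  proof -
    have Kk: "k \<ge> N - 1" if "k \<in> K" for k using K(2) that N by auto
    have ck: "coefm (real n) p \<alpha> ((l0/2^k)^n) \<le> D * real k powr (s - 1)" if k: "k \<in> K" for k
    proof -
      have kK1: "k \<ge> K1" using Kk[OF k] N by simp
      have m0: "(l0/2^k)^n > 0" using l0 by simp
      have "coefm (real n) p \<alpha> ((l0/2^k)^n) = (1 - min (ln ((l0/2^k)^n)) 0) powr t"
        unfolding coefm_def t_def using \<beta> m0 l0 by simp
      also have "\<dots> \<le> D * real k powr t" using DK[OF kK1] .
      finally show ?thesis unfolding ts .
    qed
    have "(\<Sum>k\<in>K. coefm (real n) p \<alpha> ((l0/2^k)^n)) \<le> (\<Sum>k\<in>K. D * real k powr (s - 1))"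
      using ck by (rule sum_mono)
    also have "\<dots> = D * (\<Sum>k\<in>K. real k powr (s - 1))" by (simp add: sum_distrib_left)
    also have "\<dots> \<le> D * ((real (N - 1) - 1) powr s / (-s))"
      using powr_tail_sum[OF s, of "N - 1" K] N K Kk D by (intro mult_left_mono) auto
    also have "\<dots> \<le> D * ((real N / 2) powr s / (-s))"
    proof -
      have "real N / 2 \<le> real (N - 1) - 1" using N by linarith
      then have "(real (N - 1) - 1) powr s \<le> (real N / 2) powr s"
        using s N by (intro powr_mono2') auto
      then show ?thesis using s D by (intro mult_left_mono divide_right_mono) auto
    qed
    also have "\<dots> = C^2 * real N powr s"
    proof -
      have "(real N / 2) powr s = real N powr s / 2 powr s" by (rule powr_divide)
      also have "\<dots> = 2 powr (-s) * real N powr s" by (simp add: powr_minus field_simps)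
      finally show ?thesis unfolding C2 by simp
    qed
    also have "\<dots> = (C * real N powr (1/2 - \<alpha>))\<^sup>2"
    proof -
      have "real N powr s = (real N powr (1/2 - \<alpha>))^2"
        unfolding s_def by (simp add: power2_eq_square powr_add[symmetric])
      then show ?thesis by (simp add: power_mult_distrib)
    qed
    finally show ?thesis .
  qed
  show ?thesis
    using C main by (intro exI[of _ C] conjI exI[of _ "K1 + 4"]) auto
qed

lemma side_len_gen:
  fixes a0 :: "real^'n"
  assumes "Q \<in> dyadic_cubes a0 l0" "l0 > 0" "side_len Q \<le> 2 powr (- (real N - 1)) * l0"
  shows "real N - 1 \<le> real (dgen a0 l0 Q)"
proof -
  define k where "k = dgen a0 l0 Q"
  have m: "measure lebesgue Q = (l0 / 2^k) ^ CARD('n)"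
    using dyadic_measure(2)[OF assms(1,2)] by (simp add: k_def)
  have p: "l0 / 2^k > 0" using assms(2) by simp
  have "side_len Q = ((l0 / 2^k) ^ CARD('n)) powr (1 / real CARD('n))"
    unfolding side_len_def m ..
  also have "\<dots> = l0 / 2^k"
    using p assms(2) by (simp add: powr_realpow[symmetric] powr_powr)
  also have "\<dots> = 2 powr (- real k) * l0"
    by (simp add: powr_minus powr_realpow divide_inverse)
  finally have "2 powr (- real k) * l0 \<le> 2 powr (- (real N - 1)) * l0" using assms(3) by simp
  then have "(2::real) powr (- real k) \<le> 2 powr (- (real N - 1))" using assms(2) by simp
  then have "- real k \<le> - (real N - 1)" by (subst (asm) powr_le_cancel_iff) auto
  then show ?thesis by (simp add: k_def)
qed

lemma ennsqrt_le: "b \<ge> 0 \<Longrightarrow> X \<le> ennreal (b^2) \<Longrightarrow> ennsqrt X \<le> ennreal b"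
proof -
  assume b: "b \<ge> 0" and X: "X \<le> ennreal (b^2)"
  have Xt: "X \<noteq> top" using X by (metis ennreal_neq_top neq_top_trans)
  obtain x where x: "X = ennreal x" "x \<ge> 0" using Xt by (cases X) auto
  have "x \<le> b^2" using X x b by simp
  then have "sqrt x \<le> b" using b real_le_lsqrt x(2) by blast
  then show ?thesis using x by (simp add: ennsqrt_def ennreal_leI)
qed

lemma sN_bound:
  fixes a0 :: "real^'n"
  assumes l0: "l0 > 0" and f: "rmt_norm a0 l0 p \<alpha> f \<le> 1" and b: "b \<ge> 0"
    and H: "\<forall>K. finite K \<and> (\<forall>k\<in>K. real N - 1 \<le> real k) \<longrightarrow>
      (\<Sum>k\<in>K. coefm (real CARD('n)) p \<alpha> ((l0/2^k)^CARD('n))) \<le> b^2"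
  shows "s_N a0 l0 N f \<le> ennreal b"
  unfolding s_N_def
proof (rule SUP_least)
  fix S assume S: "S \<in> sparse_families a0 l0"
  have Sd: "S \<subseteq> dyadic_cubes a0 l0" using S by (simp add: sparse_families_def)
  let ?T = "{Q \<in> S. side_len Q \<le> 2 powr (- (real N - 1)) * l0}"
  let ?t = "\<lambda>Q. (measure lebesgue Q powr (1 / real CARD('n) - 1/2)
                     * (LINT x:Q|lebesgue. \<bar>f x\<bar>))\<^sup>2"
  have "(\<Sum>\<^sub>\<infinity> Q \<in> ?T. ennreal (?t Q)) \<le> ennreal (b^2)"
  proof (rule infsum_le_finite_sums)
    show "(\<lambda>Q. ennreal (?t Q)) summable_on ?T" by (rule nonneg_summable_on_complete) simp
    fix F assume F: "finite F" "F \<subseteq> ?T"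
    have FD: "F \<subseteq> dyadic_cubes a0 l0" using F(2) Sd by blast
    have e: "(\<Sum>Q\<in>F. ennreal (?t Q)) = ennreal (\<Sum>Q\<in>F. ?t Q)"
      by (simp add: sum_ennreal)
    have "(\<Sum>Q\<in>F. ?t Q) \<le> (\<Sum>k\<in>dgen a0 l0 ` F. coefm (real CARD('n)) p \<alpha> ((l0 / 2^k) ^ CARD('n)))"
      using group_bound[OF f l0 F(1) FD] .
    also have "\<dots> \<le> b^2"
    proof -
      have "\<forall>k\<in>dgen a0 l0 ` F. real N - 1 \<le> real k"
      proof
        fix k assume "k \<in> dgen a0 l0 ` F"
        then obtain Q where Q: "Q \<in> F" "k = dgen a0 l0 Q" by blast
        have "side_len Q \<le> 2 powr (- (real N - 1)) * l0" using Q(1) F(2) by blast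
        then show "real N - 1 \<le> real k" using side_len_gen[OF _ l0] FD Q by blast
      qed
      moreover have "finite (dgen a0 l0 ` F)" using F(1) by (rule finite_imageI)
      ultimately show ?thesis using H by blast
    qed
    finally show "(\<Sum>Q\<in>F. ennreal (?t Q)) \<le> ennreal (b^2)" unfolding e by (rule ennreal_leI)
  qed
  then show "ennsqrt (\<Sum>\<^sub>\<infinity> Q \<in> ?T. ennreal (?t Q)) \<le> ennreal b"
    using b by (rule ennsqrt_le[rotated])
qed

lemma sNRMT_bound:
  fixes a0 :: "real^'n"
  assumes l0: "l0 > 0" and b: "b \<ge> 0"
    and H: "\<forall>K. finite K \<and> (\<forall>k\<in>K. real N - 1 \<le> real k) \<longrightarrow>
      (\<Sum>k\<in>K. coefm (real CARD('n)) p \<alpha> ((l0/2^k)^CARD('n))) \<le> b^2"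
  shows "s_N_RMT a0 l0 p \<alpha> N \<le> ennreal b"
  unfolding s_N_RMT_def
  by (rule SUP_least) (use sN_bound[OF l0 _ b H] in auto)

theorem proposition5p3:
  fixes a0 :: "real^'n" and l0 p \<alpha> :: real
  assumes "CARD('n) \<ge> 2" and "l0 > 0"
  shows "(p > 2 * real CARD('n) / (real CARD('n) + 2) \<longrightarrow>
            (\<exists>C>0. \<exists>N0. \<forall>N\<ge>N0. s_N_RMT a0 l0 p \<alpha> N \<le>
               ennreal (C * 2 powr (- real N * real CARD('n)
                          * ((real CARD('n) + 2) / (2 * real CARD('n)) - 1 / p))
                         * real N powr (- \<alpha>))))
       \<and> (p = 2 * real CARD('n) / (real CARD('n) + 2) \<and> \<alpha> > 1/2 \<longrightarrow>
            (\<exists>C>0. \<exists>N0. \<forall>N\<ge>N0. s_N_RMT a0 l0 p \<alpha> N \<le>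
               ennreal (C * real N powr (1/2 - \<alpha>))))"
proof (intro conjI impI)
  let ?n = "real CARD('n)"
  have n1: "CARD('n) \<ge> 1" using assms(1) by simp
  have np: "?n > 0" using n1 by simp
  assume p: "p > 2 * ?n / (?n + 2)"
  have pp: "p > 0" using p np by (smt (verit) divide_pos_pos)
  have "1 / p < (?n + 2) / (2 * ?n)"
    using p pp np by (simp add: field_simps)
  then have \<beta>: "(?n + 2) / (2 * ?n) - 1 / p > 0" by simp
  obtain C N0 where C: "C > 0" and CN: "\<forall>N\<ge>N0. \<forall>K. finite K \<and> (\<forall>k\<in>K. real N - 1 \<le> real k) \<longrightarrow>
     (\<Sum>k\<in>K. coefm ?n p \<alpha> ((l0/2^k)^CARD('n)))
       \<le> (C * 2 powr (- real N * ?n * ((?n + 2) / (2 * ?n) - 1 / p)) * real N powr (-\<alpha>))\<^sup>2"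
    using case1[OF n1 assms(2) \<beta>] by blast
  show "\<exists>C>0. \<exists>N0. \<forall>N\<ge>N0. s_N_RMT a0 l0 p \<alpha> N \<le>
               ennreal (C * 2 powr (- real N * ?n * ((?n + 2) / (2 * ?n) - 1 / p)) * real N powr (- \<alpha>))"
  proof (intro exI[of _ C] conjI exI[of _ N0] allI impI)
    show "C > 0" by (rule C)
    fix N assume N: "N \<ge> N0"
    show "s_N_RMT a0 l0 p \<alpha> N \<le>
               ennreal (C * 2 powr (- real N * ?n * ((?n + 2) / (2 * ?n) - 1 / p)) * real N powr (- \<alpha>))"
      using CN N C by (intro sNRMT_bound[OF assms(2)]) auto
  qed
next
  let ?n = "real CARD('n)"
  have n1: "CARD('n) \<ge> 1" using assms(1) by simp
  have np: "?n > 0" using n1 by simp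
  assume pa: "p = 2 * ?n / (?n + 2) \<and> \<alpha> > 1/2"
  have pp: "p > 0" using pa np by simp
  have "1 / p = (?n + 2) / (2 * ?n)" using pa np pp by (simp add: field_simps)
  then have \<beta>: "(?n + 2) / (2 * ?n) - 1 / p = 0" by simp
  obtain C N0 where C: "C > 0" and CN: "\<forall>N\<ge>N0. \<forall>K. finite K \<and> (\<forall>k\<in>K. real N - 1 \<le> real k) \<longrightarrow>
     (\<Sum>k\<in>K. coefm ?n p \<alpha> ((l0/2^k)^CARD('n))) \<le> (C * real N powr (1/2 - \<alpha>))\<^sup>2"
    using case2[OF n1 assms(2) \<beta>] pa by blast
  show "\<exists>C>0. \<exists>N0. \<forall>N\<ge>N0. s_N_RMT a0 l0 p \<alpha> N \<le> ennreal (C * real N powr (1/2 - \<alpha>))"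
  proof (intro exI[of _ C] conjI exI[of _ N0] allI impI)
    show "C > 0" by (rule C)
    fix N assume N: "N \<ge> N0"
    show "s_N_RMT a0 l0 p \<alpha> N \<le> ennreal (C * real N powr (1/2 - \<alpha>))"
      using CN N C by (intro sNRMT_bound[OF assms(2)]) auto
  qed
qed

end
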